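(* Let $a\in\mathbb{R}$ and let $\alpha_0,\alpha_1,\alpha_2,\alpha_3>0$ be fixed. For $b>a$, $A>0$, $B>0$ define \[ Q_0(x)=\begin{cases} A, & a\le x<b,\\ -B, & b\le x,\end{cases} \] and let $u$ be the solution of \[ u''''(x)+Q_0(x)u(x)=0,\qquad x>a, \] satisfying $u(a)=\alpha_0$, $u'(a)=\alpha_1$, $u''(a)=\alpha_2$, $u'''(a)=\alpha_3$. Then (given $a$) one can choose $b>a$, $A>0$ and $B>0$ such that \[ u'(\zeta)=u'''(\zeta)=0 \] for some $\zeta\in(b,\infty)$.
   Context: Since $Q_0$ is piecewise constant, the solution $u$ is understood as the function $u\in C^3[a,\infty)$ which satisfies the differential equation on each of the intervals $(a,b)$ and $(b,\infty)$ (equivalently, $u'''$ is absolutely continuous and the equation holds almost everywhere). *)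

theory Defs
  imports "HOL-Analysis.Analysis"
begin

definition Q0 :: "real \<Rightarrow> real \<Rightarrow> real \<Rightarrow> real \<Rightarrow> real" where
  "Q0 b A B x = (if x < b then A else - B)"

definition ode_solution ::
  "real \<Rightarrow> real \<Rightarrow> real \<Rightarrow> real \<Rightarrow> real \<Rightarrow> real \<Rightarrow> real \<Rightarrow> real \<Rightarrow>
   (real \<Rightarrow> real) \<Rightarrow> (real \<Rightarrow> real) \<Rightarrow> (real \<Rightarrow> real) \<Rightarrow> (real \<Rightarrow> real) \<Rightarrow> bool" where
  "ode_solution a b A B \<alpha>0 \<alpha>1 \<alpha>2 \<alpha>3 u u1 u2 u3 \<longleftrightarrow>
     (\<forall>x\<ge>a. (u has_real_derivative u1 x) (at x within {a..}) \<and>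
             (u1 has_real_derivative u2 x) (at x within {a..}) \<and>
             (u2 has_real_derivative u3 x) (at x within {a..})) \<and>
     continuous_on {a..} u3 \<and>
     (\<forall>x. a < x \<and> x \<noteq> b \<longrightarrow> (u3 has_real_derivative (- Q0 b A B x * u x)) (at x)) \<and>
     u a = \<alpha>0 \<and> u1 a = \<alpha>1 \<and> u2 a = \<alpha>2 \<and> u3 a = \<alpha>3"

end

theory Submission
  imports Defs
begin

definition e0 :: "real \<Rightarrow> real" where "e0 t = cosh t * cos t"
definition e1 :: "real \<Rightarrow> real" where "e1 t = (cosh t * sin t + sinh t * cos t) / 2"
definition e2 :: "real \<Rightarrow> real" where "e2 t = sinh t * sin t / 2"
definition e3 :: "real \<Rightarrow> real" where "e3 t = (cosh t * sin t - sinh t * cos t) / 4"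
definition W :: "real \<Rightarrow> real \<Rightarrow> real \<Rightarrow> real \<Rightarrow> real \<Rightarrow> real" where
  "W c0 c1 c2 c3 t = c0 * e0 t + c1 * e1 t + c2 * e2 t + c3 * e3 t"

lemma W_deriv:
  "((\<lambda>x. W c0 c1 c2 c3 (x - a)) has_real_derivative W c1 c2 c3 (-4*c0) (x - a)) (at x within S)"
  unfolding W_def e0_def e1_def e2_def e3_def
  by (rule derivative_eq_intros refl | simp)+ (simp add: algebra_simps)

lemma W_0 [simp]: "W c0 c1 c2 c3 0 = c0"
  by (simp add: W_def e0_def e1_def e2_def e3_def)

lemma W_scale: "W (k*c0) (k*c1) (k*c2) (k*c3) t = k * W c0 c1 c2 c3 t"
  by (simp add: W_def algebra_simps)

lemma cont_W: "continuous_on S (\<lambda>x. W c0 c1 c2 c3 (x - a))"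
  unfolding W_def e0_def e1_def e2_def e3_def by (intro continuous_intros) auto

lemma tanh_artanh_real:
  assumes "-1 < (y::real)" "y < 1" shows "tanh (artanh y) = y"
proof -
  have p: "(1+y)/(1-y) > 0" using assms by simp
  have "- 2 * artanh y = - ln ((1+y)/(1-y))" unfolding artanh_def by simp
  then have "exp (- 2 * artanh y) = inverse ((1+y)/(1-y))"
    using p by (simp add: exp_minus)
  then have "exp (- 2 * artanh y) = (1-y)/(1+y)" by simp
  moreover have "(1 - (1-y)/(1+y)) / (1 + (1-y)/(1+y)) = y"
  proof -
    have "1 + y > 0" using assms by simp
    then show ?thesis by (simp add: field_simps)
  qed
  ultimately show ?thesis unfolding tanh_real_altdef by simp
qed
lemma mono_open:
  fixes f f' :: "real \<Rightarrow> real"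
  assumes "a \<le> b" "continuous_on {a..b} f"
    "\<And>x. a < x \<Longrightarrow> x < b \<Longrightarrow> (f has_real_derivative f' x) (at x)"
    "\<And>x. a < x \<Longrightarrow> x < b \<Longrightarrow> f' x \<ge> 0"
  shows "f a \<le> f b"
proof (cases "a = b")
  case True then show ?thesis by simp
next
  case False
  then have "a < b" using assms(1) by simp
  from MVT[OF this assms(2)] obtain l z where lz: "a < z" "z < b" "DERIV f z :> l" "f b - f a = (b - a) * l"
    using assms(3) real_differentiable_def by blast
  then have "l = f' z" using assms(3) DERIV_unique by blast
  then have "l \<ge> 0" using assms(4) lz by simp
  then have "(b - a) * l \<ge> 0" using \<open>a < b\<close> by simp
  then show ?thesis using lz by linarith
qed

lemma const_open:
  fixes f :: "real \<Rightarrow> real"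
  assumes "a \<le> b" "continuous_on {a..b} f"
    "\<And>x. a < x \<Longrightarrow> x < b \<Longrightarrow> (f has_real_derivative 0) (at x)"
  shows "f a = f b"
proof -
  have "f a \<le> f b" by (rule mono_open[OF assms(1,2), of "\<lambda>_. 0"]) (use assms(3) in auto)
  moreover have "- f a \<le> - f b"
    by (rule mono_open[OF assms(1), of "\<lambda>x. - f x" "\<lambda>_. 0"])
       (use assms(2) DERIV_minus[OF assms(3)] in \<open>auto intro: continuous_intros\<close>)
  ultimately show ?thesis by simp
qed

lemma ode_derivs:
  assumes "ode_solution a b A B \<alpha>0 \<alpha>1 \<alpha>2 \<alpha>3 u u1 u2 u3" "x > a"
  shows "(u has_real_derivative u1 x) (at x)" "(u1 has_real_derivative u2 x) (at x)"
    "(u2 has_real_derivative u3 x) (at x)"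
proof -
  have i: "x \<in> interior {a..}" using assms(2) by simp
  show "(u has_real_derivative u1 x) (at x)" "(u1 has_real_derivative u2 x) (at x)"
    "(u2 has_real_derivative u3 x) (at x)"
    using assms(1,2) unfolding ode_solution_def at_within_interior[OF i, symmetric] by auto
qed

lemma ode_cont:
  assumes "ode_solution a b A B \<alpha>0 \<alpha>1 \<alpha>2 \<alpha>3 u u1 u2 u3"
  shows "continuous_on {a..} u" "continuous_on {a..} u1" "continuous_on {a..} u2" "continuous_on {a..} u3"
proof -
  have d: "\<forall>x\<in>{a..}. (u has_real_derivative u1 x) (at x within {a..}) \<and>
             (u1 has_real_derivative u2 x) (at x within {a..}) \<and>
             (u2 has_real_derivative u3 x) (at x within {a..})"
    using assms unfolding ode_solution_def by auto
  show "continuous_on {a..} u" unfolding continuous_on_eq_continuous_within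
    using d DERIV_continuous by blast
  show "continuous_on {a..} u1" unfolding continuous_on_eq_continuous_within
    using d DERIV_continuous by blast
  show "continuous_on {a..} u2" unfolding continuous_on_eq_continuous_within
    using d DERIV_continuous by blast
  show "continuous_on {a..} u3" using assms unfolding ode_solution_def by auto
qed

lemma region2:
  assumes ode: "ode_solution a b A B \<alpha>0 \<alpha>1 \<alpha>2 \<alpha>3 u u1 u2 u3" and ab: "a < b"
    and B: "B = k^4" and k: "k > 0" and x: "x > 0" and z: "\<zeta> = b + x / k"
    and q: "u1 b = 0"
    and J1: "u3 b * cosh x + (u b * k^3 + u2 b * k) * sinh x = 0"
    and J2: "u3 b * cos x + (u b * k^3 - u2 b * k) * sin x = 0"
  shows "u1 \<zeta> = 0 \<and> u3 \<zeta> = 0"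
proof -
  have bz: "b \<le> \<zeta>" using z x k by simp
  have sub: "{b..\<zeta>} \<subseteq> {a..}" using ab by auto
  note c = ode_cont[OF ode]
  have cs: "continuous_on {b..\<zeta>} u" "continuous_on {b..\<zeta>} u1" "continuous_on {b..\<zeta>} u2"
    "continuous_on {b..\<zeta>} u3" using c continuous_on_subset[OF _ sub] by blast+
  have kb: "k * (b - \<zeta>) = - x" using z k by (simp add: field_simps)
  have d3: "(u3 has_real_derivative k^4 * u y) (at y)" if "b < y" for y
  proof -
    have "(u3 has_real_derivative (- Q0 b A B y * u y)) (at y)"
      using ode that ab unfolding ode_solution_def by auto
    then show ?thesis using that B by (simp add: Q0_def)
  qed
  define J1f where "J1f = (\<lambda>y. u3 y * cosh (k*(y-\<zeta>)) - u2 y * (k * sinh (k*(y-\<zeta>)))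
      + u1 y * (k^2 * cosh (k*(y-\<zeta>))) - u y * (k^3 * sinh (k*(y-\<zeta>))))"
  define J2f where "J2f = (\<lambda>y. u3 y * cos (k*(y-\<zeta>)) + u2 y * (k * sin (k*(y-\<zeta>)))
      - u1 y * (k^2 * cos (k*(y-\<zeta>))) - u y * (k^3 * sin (k*(y-\<zeta>))))"
  have "J1f b = J1f \<zeta>"
  proof (rule const_open[OF bz])
    show "continuous_on {b..\<zeta>} J1f" unfolding J1f_def using cs by (intro continuous_intros)
    fix y assume y: "b < y" "y < \<zeta>"
    have ay: "a < y" using ab y by simp
    note dd = ode_derivs[OF ode ay] d3[OF y(1)]
    show "(J1f has_real_derivative 0) (at y)" unfolding J1f_def
      apply (rule derivative_eq_intros dd refl)+
      by (simp add: algebra_simps power_def)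
  qed
  moreover have "J2f b = J2f \<zeta>"
  proof (rule const_open[OF bz])
    show "continuous_on {b..\<zeta>} J2f" unfolding J2f_def using cs by (intro continuous_intros)
    fix y assume y: "b < y" "y < \<zeta>"
    have ay: "a < y" using ab y by simp
    note dd = ode_derivs[OF ode ay] d3[OF y(1)]
    show "(J2f has_real_derivative 0) (at y)" unfolding J2f_def
      apply (rule derivative_eq_intros dd refl)+
      by (simp add: algebra_simps power_def)
  qed
  moreover have "J1f b = 0" unfolding J1f_def kb using q J1 by (simp add: algebra_simps)
  moreover have "J2f b = 0" unfolding J2f_def kb using q J2 by (simp add: algebra_simps)
  moreover have "J1f \<zeta> = u3 \<zeta> + k^2 * u1 \<zeta>" unfolding J1f_def by simp
  moreover have "J2f \<zeta> = u3 \<zeta> - k^2 * u1 \<zeta>" unfolding J2f_def by simp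
  ultimately have "u3 \<zeta> + k^2 * u1 \<zeta> = 0" "u3 \<zeta> - k^2 * u1 \<zeta> = 0" by auto
  then show ?thesis using k by auto
qed
lemma energy_ineq:
  fixes e0 e1 e2 e3 :: real
  shows "2 * (e0*e1 + e1*e2 + e2*e3 + e3*(-4*e0)) \<le> 5 * (e0^2 + e1^2 + e2^2 + e3^2)"
proof -
  have "5 * (e0^2 + e1^2 + e2^2 + e3^2) - 2 * (e0*e1 + e1*e2 + e2*e3 + e3*(-4*e0))
     = (e0-e1)^2 + (e1-e2)^2 + (e2-e3)^2 + 4*(e3+e0)^2 + 3*e1^2 + 3*e2^2"
    by (simp add: power2_eq_square algebra_simps)
  moreover have "(e0-e1)^2 + (e1-e2)^2 + (e2-e3)^2 + 4*(e3+e0)^2 + 3*e1^2 + 3*e2^2 \<ge> 0"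
    by (intro add_nonneg_nonneg) auto
  ultimately show ?thesis by linarith
qed

lemma region1:
  assumes ode: "ode_solution a b 4 B \<alpha>0 \<alpha>1 \<alpha>2 \<alpha>3 u u1 u2 u3" and ab: "a < b"
  shows "u b = W \<alpha>0 \<alpha>1 \<alpha>2 \<alpha>3 (b - a) \<and> u1 b = W \<alpha>1 \<alpha>2 \<alpha>3 (-4*\<alpha>0) (b - a) \<and>
         u2 b = W \<alpha>2 \<alpha>3 (-4*\<alpha>0) (-4*\<alpha>1) (b - a) \<and>
         u3 b = W \<alpha>3 (-4*\<alpha>0) (-4*\<alpha>1) (-4*\<alpha>2) (b - a)"
proof -
  define w where "w = (\<lambda>x. W \<alpha>0 \<alpha>1 \<alpha>2 \<alpha>3 (x - a))"
  define w1 where "w1 = (\<lambda>x. W \<alpha>1 \<alpha>2 \<alpha>3 (-4*\<alpha>0) (x - a))"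
  define w2 where "w2 = (\<lambda>x. W \<alpha>2 \<alpha>3 (-4*\<alpha>0) (-4*\<alpha>1) (x - a))"
  define w3 where "w3 = (\<lambda>x. W \<alpha>3 (-4*\<alpha>0) (-4*\<alpha>1) (-4*\<alpha>2) (x - a))"
  have dw: "\<And>x. (w has_real_derivative w1 x) (at x)" "\<And>x. (w1 has_real_derivative w2 x) (at x)"
    "\<And>x. (w2 has_real_derivative w3 x) (at x)" "\<And>x. (w3 has_real_derivative (-4 * w x)) (at x)"
    unfolding w_def w1_def w2_def w3_def
    using W_deriv[of \<alpha>0 \<alpha>1 \<alpha>2 \<alpha>3 a] W_deriv[of \<alpha>1 \<alpha>2 \<alpha>3 "-4*\<alpha>0" a]
      W_deriv[of \<alpha>2 \<alpha>3 "-4*\<alpha>0" "-4*\<alpha>1" a] W_deriv[of \<alpha>3 "-4*\<alpha>0" "-4*\<alpha>1" "-4*\<alpha>2" a]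
      W_scale[of "-4" \<alpha>0 \<alpha>1 \<alpha>2 \<alpha>3]
    by auto
  have cw: "continuous_on S w" "continuous_on S w1" "continuous_on S w2" "continuous_on S w3" for S
    unfolding w_def w1_def w2_def w3_def by (rule cont_W)+
  have wa: "w a = \<alpha>0" "w1 a = \<alpha>1" "w2 a = \<alpha>2" "w3 a = \<alpha>3"
    unfolding w_def w1_def w2_def w3_def by simp_all
  have ua: "u a = \<alpha>0" "u1 a = \<alpha>1" "u2 a = \<alpha>2" "u3 a = \<alpha>3"
    using ode unfolding ode_solution_def by auto
  note c = ode_cont[OF ode]
  have sub: "{a..b} \<subseteq> {a..}" by auto
  have cs: "continuous_on {a..b} u" "continuous_on {a..b} u1" "continuous_on {a..b} u2"
    "continuous_on {a..b} u3" using c continuous_on_subset[OF _ sub] by blast+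
  have d3: "(u3 has_real_derivative -4 * u y) (at y)" if "a < y" "y < b" for y
  proof -
    have "(u3 has_real_derivative (- Q0 b 4 B y * u y)) (at y)"
      using ode that unfolding ode_solution_def by auto
    then show ?thesis using that by (simp add: Q0_def)
  qed
  define E where "E = (\<lambda>y. (u y - w y)^2 + (u1 y - w1 y)^2 + (u2 y - w2 y)^2 + (u3 y - w3 y)^2)"
  define F where "F = (\<lambda>y. - (E y * exp (- 5 * (y - a))))"
  have "F a \<le> F b"
  proof (rule mono_open[where f = F and a = a and b = b and f' = "\<lambda>y. - ((2 * ((u y - w y) * (u1 y - w1 y) + (u1 y - w1 y) * (u2 y - w2 y)
        + (u2 y - w2 y) * (u3 y - w3 y) + (u3 y - w3 y) * (-4 * (u y - w y))) - 5 * E y) * exp (- 5 * (y - a)))"])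
    show "a \<le> b" using ab by simp
    show "continuous_on {a..b} F" unfolding F_def E_def using cs cw by (intro continuous_intros)
    fix y assume y: "a < y" "y < b"
    note dd = ode_derivs[OF ode y(1)] d3[OF y] dw
    show "(F has_real_derivative - ((2 * ((u y - w y) * (u1 y - w1 y) + (u1 y - w1 y) * (u2 y - w2 y)
        + (u2 y - w2 y) * (u3 y - w3 y) + (u3 y - w3 y) * (-4 * (u y - w y))) - 5 * E y) * exp (- 5 * (y - a)))) (at y)"
      unfolding F_def E_def
      apply (rule derivative_eq_intros dd refl)+
      by (simp add: algebra_simps power2_eq_square)
    show "0 \<le> - ((2 * ((u y - w y) * (u1 y - w1 y) + (u1 y - w1 y) * (u2 y - w2 y)
        + (u2 y - w2 y) * (u3 y - w3 y) + (u3 y - w3 y) * (-4 * (u y - w y))) - 5 * E y) * exp (- 5 * (y - a)))"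
      using energy_ineq[of "u y - w y" "u1 y - w1 y" "u2 y - w2 y" "u3 y - w3 y"]
      unfolding E_def by (simp add: mult_nonpos_nonneg mult_le_0_iff)
  qed
  moreover have "F a = 0" unfolding F_def E_def using ua wa by simp
  ultimately have "E b * exp (- 5 * (b - a)) \<le> 0" unfolding F_def by simp
  then have "E b \<le> 0" by (simp add: mult_le_0_iff)
  then have "u b = w b \<and> u1 b = w1 b \<and> u2 b = w2 b \<and> u3 b = w3 b"
    unfolding E_def by (smt (verit) zero_le_power2 power2_less_eq_zero_iff)
  then show ?thesis unfolding w_def w1_def w2_def w3_def by simp
qed
lemma cubic_mono:
  fixes p r k k' :: real
  assumes "p > 0" "k' > 0" "p * k'^3 + r * k' > 0" "k' \<le> k"
  shows "p * k'^3 + r * k' \<le> p * k^3 + r * k"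
proof -
  have "p * k'^2 + r > 0"
  proof -
    have "k' * (p * k'^2 + r) > 0" using assms(3) by (simp add: algebra_simps power_def)
    then show ?thesis using assms(2) by (simp add: zero_less_mult_iff)
  qed
  moreover have "p * (k^2 + k*k') \<ge> 0" using assms by simp
  ultimately have "p * (k^2 + k*k' + k'^2) + r \<ge> 0" by (simp add: algebra_simps)
  then have "(k - k') * (p * (k^2 + k*k' + k'^2) + r) \<ge> 0" using assms(4) by simp
  moreover have "(k - k') * (p * (k^2 + k*k' + k'^2) + r) = (p * k^3 + r * k) - (p * k'^3 + r * k')"
    by (simp add: algebra_simps power_def)
  ultimately show ?thesis by simp
qed

lemma choose_params:
  fixes p r s :: real
  assumes p: "p > 0" and s: "s < 0"
  shows "\<exists>k x. k > 0 \<and> x > 0 \<and> s * cosh x + (p * k^3 + r * k) * sinh x = 0 \<and>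
                s * cos x + (p * k^3 - r * k) * sin x = 0"
proof -
  define \<sigma> where "\<sigma> = - s"
  have \<sigma>: "\<sigma> > 0" using s \<sigma>_def by simp
  define D where "D = (\<lambda>k::real. p * k^3 + r * k)"
  have cD: "continuous_on S D" for S unfolding D_def by (intro continuous_intros)
  define c1 where "c1 = \<sigma> / tanh pi"
  define c2 where "c2 = \<sigma> / tanh (2*pi)"
  have t1: "0 < tanh pi" "tanh pi < 1" using tanh_real_lt_1 by auto
  have t2: "0 < tanh (2*pi)" "tanh (2*pi) < 1" using tanh_real_lt_1 by auto
  have t12: "tanh pi < tanh (2*pi)" by simp
  have c2s: "\<sigma> < c2" unfolding c2_def using t2 \<sigma> by (simp add: field_simps)
  have c12: "c2 < c1" unfolding c1_def c2_def using t1 t2 t12 \<sigma> by (simp add: frac_less2)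
  define K where "K = max 1 ((c1 + \<bar>r\<bar>) / p)"
  have K1: "K \<ge> 1" unfolding K_def by simp
  have K2: "K * p \<ge> c1 + \<bar>r\<bar>" unfolding K_def using p by (simp add: field_simps max_def)
  have DK: "D K \<ge> c1"
  proof -
    have "K^2 * p \<ge> K * p" using K1 p by (simp add: power2_eq_square mult_right_mono)
    then have "K^2 * p \<ge> c1 + \<bar>r\<bar>" using K2 by linarith
    then have "K * (K^2 * p) \<ge> K * (c1 + \<bar>r\<bar>)" using K1 by (simp add: mult_left_mono)
    moreover have "K * (c1 + \<bar>r\<bar>) \<ge> c1 + K * \<bar>r\<bar>" using K1 \<sigma> c2s c12
      by (simp add: algebra_simps)
    moreover have "r * K \<ge> - K * \<bar>r\<bar>" using K1 by (simp add: abs_if)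
    ultimately show ?thesis unfolding D_def by (simp add: power_def algebra_simps)
  qed
  have D0: "D 0 = 0" unfolding D_def by simp
  obtain k1 where k1: "0 \<le> k1" "k1 \<le> K" "D k1 = c1"
    using IVT'[of D 0 c1 K] D0 DK K1 cD c2s c12 \<sigma> by auto
  obtain k2 where k2: "0 \<le> k2" "k2 \<le> K" "D k2 = c2"
    using IVT'[of D 0 c2 K] D0 DK K1 cD c2s c12 \<sigma> by auto
  have k1p: "k1 > 0" using k1 D0 c2s c12 \<sigma> by (cases "k1 = 0") auto
  have k2p: "k2 > 0" using k2 D0 c2s c12 \<sigma> by (cases "k2 = 0") auto
  have k21: "k2 < k1"
  proof (rule ccontr)
    assume "\<not> k2 < k1"
    then have "D k1 \<le> D k2" using cubic_mono[OF p k1p, of r k2] k1 c2s c12 \<sigma> unfolding D_def by auto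
    then show False using k1 k2 c12 by simp
  qed
  have Dge: "D k \<ge> c2" if "k2 \<le> k" for k
    using cubic_mono[OF p k2p, of r k] k2 c2s \<sigma> that unfolding D_def by auto
  define X where "X = (\<lambda>k. artanh (\<sigma> / D k))"
  define G where "G = (\<lambda>k. s * cos (X k) + (p * k^3 - r * k) * sin (X k))"
  have range: "\<sigma> / D k \<in> {-1<..<1}" "\<sigma> / D k > 0" if "k2 \<le> k" for k
  proof -
    have "D k > \<sigma>" using Dge[OF that] c2s by simp
    then show "\<sigma> / D k \<in> {-1<..<1}" "\<sigma> / D k > 0" using \<sigma> by (auto simp: field_simps)
  qed
  have Dnz: "p * k^3 + r * k \<noteq> 0" if "k2 \<le> k" for k
    using Dge[OF that] c2s \<sigma> unfolding D_def by auto
  have cG: "continuous_on {k2..k1} G" unfolding G_def X_def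
    apply (intro continuous_intros cD)
    using range Dnz by (auto simp: D_def)
  have Xk1: "X k1 = pi" unfolding X_def k1(3) c1_def using t1 \<sigma> by (simp add: artanh_tanh_real)
  have Xk2: "X k2 = 2*pi" unfolding X_def k2(3) c2_def using t2 \<sigma> by (simp add: artanh_tanh_real)
  have "G k2 \<le> 0" unfolding G_def Xk2 using s by simp
  moreover have "0 \<le> G k1" unfolding G_def Xk1 using s by simp
  ultimately obtain k where k: "k2 \<le> k" "k \<le> k1" "G k = 0"
    using IVT'[of G k2 0 k1] k21 cG by auto
  have kp: "k > 0" using k k2p by simp
  have Xp: "X k > 0" unfolding X_def using range[OF k(1)]
    by (metis tanh_real_pos_iff tanh_artanh_real greaterThanLessThan_iff)
  have tX: "tanh (X k) = \<sigma> / D k" unfolding X_def using range[OF k(1)] by (simp add: tanh_artanh_real)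
  have Dpos: "D k > 0" using Dge[OF k(1)] c2s \<sigma> by simp
  have "s * cosh (X k) + D k * sinh (X k) = 0"
  proof -
    have "sinh (X k) / cosh (X k) = \<sigma> / D k" using tX by (simp add: tanh_def)
    then have "D k * sinh (X k) = \<sigma> * cosh (X k)" using Dpos
      by (simp add: field_simps)
    then show ?thesis unfolding \<sigma>_def by simp
  qed
  then show ?thesis using kp Xp k(3) unfolding G_def D_def by blast
qed
lemma mono_all:
  fixes f f' :: "real \<Rightarrow> real"
  assumes "a \<le> b" "\<And>x. a \<le> x \<Longrightarrow> x \<le> b \<Longrightarrow> (f has_real_derivative f' x) (at x)"
    "\<And>x. a \<le> x \<Longrightarrow> x \<le> b \<Longrightarrow> f' x \<ge> 0"
  shows "f a \<le> f b"
  by (rule DERIV_nonneg_imp_nondecreasing[OF assms(1)]) (use assms(2,3) in blast)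

lemma find_b:
  fixes a \<alpha>0 \<alpha>1 \<alpha>2 \<alpha>3 :: real
  assumes pos: "\<alpha>0 > 0" "\<alpha>1 > 0" "\<alpha>2 > 0" "\<alpha>3 > 0"
  shows "\<exists>b>a. W \<alpha>1 \<alpha>2 \<alpha>3 (-4*\<alpha>0) (b - a) = 0 \<and> W \<alpha>0 \<alpha>1 \<alpha>2 \<alpha>3 (b - a) > 0 \<and>
           W \<alpha>3 (-4*\<alpha>0) (-4*\<alpha>1) (-4*\<alpha>2) (b - a) < 0"
proof -
  define w where "w = (\<lambda>x. W \<alpha>0 \<alpha>1 \<alpha>2 \<alpha>3 (x - a))"
  define w1 where "w1 = (\<lambda>x. W \<alpha>1 \<alpha>2 \<alpha>3 (-4*\<alpha>0) (x - a))"
  define w2 where "w2 = (\<lambda>x. W \<alpha>2 \<alpha>3 (-4*\<alpha>0) (-4*\<alpha>1) (x - a))"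
  define w3 where "w3 = (\<lambda>x. W \<alpha>3 (-4*\<alpha>0) (-4*\<alpha>1) (-4*\<alpha>2) (x - a))"
  have dw: "\<And>x. (w has_real_derivative w1 x) (at x)" "\<And>x. (w1 has_real_derivative w2 x) (at x)"
    "\<And>x. (w2 has_real_derivative w3 x) (at x)" "\<And>x. (w3 has_real_derivative (-4 * w x)) (at x)"
    unfolding w_def w1_def w2_def w3_def
    using W_deriv[of \<alpha>0 \<alpha>1 \<alpha>2 \<alpha>3 a] W_deriv[of \<alpha>1 \<alpha>2 \<alpha>3 "-4*\<alpha>0" a]
      W_deriv[of \<alpha>2 \<alpha>3 "-4*\<alpha>0" "-4*\<alpha>1" a] W_deriv[of \<alpha>3 "-4*\<alpha>0" "-4*\<alpha>1" "-4*\<alpha>2" a]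
      W_scale[of "-4" \<alpha>0 \<alpha>1 \<alpha>2 \<alpha>3]
    by auto
  have cw1: "continuous_on S w1" for S
    unfolding w1_def by (rule cont_W)
  have wa: "w a = \<alpha>0" "w1 a = \<alpha>1" "w2 a = \<alpha>2" "w3 a = \<alpha>3"
    unfolding w_def w1_def w2_def w3_def by simp_all
  have ex: "\<exists>x0>a. w1 x0 \<le> 0"
  proof (rule ccontr)
    assume "\<not> (\<exists>x0>a. w1 x0 \<le> 0)"
    then have pos1: "\<And>x. x \<ge> a \<Longrightarrow> w1 x > 0" using wa pos
      by (metis linorder_not_le order_le_less)
    have wge: "w x \<ge> \<alpha>0" if "x \<ge> a" for x
      using mono_all[of a x w w1] dw pos1 wa that by force
    have h3: "w3 x \<le> \<alpha>3 - 4*\<alpha>0*(x-a)" if "x \<ge> a" for x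
    proof -
      have "(\<lambda>x. \<alpha>3 - 4*\<alpha>0*(x-a) - w3 x) a \<le> (\<lambda>x. \<alpha>3 - 4*\<alpha>0*(x-a) - w3 x) x"
      proof (rule mono_all[OF that, where f' = "\<lambda>y. - 4*\<alpha>0 + 4 * w y"])
        fix y show "((\<lambda>x. \<alpha>3 - 4*\<alpha>0*(x-a) - w3 x) has_real_derivative - 4*\<alpha>0 + 4 * w y) (at y)"
          by (rule derivative_eq_intros dw refl)+ simp
        assume "a \<le> y" then show "0 \<le> - 4*\<alpha>0 + 4 * w y" using wge by force
      qed
      then show ?thesis using wa by simp
    qed
    have h2: "w2 x \<le> \<alpha>2 + \<alpha>3*(x-a) - 2*\<alpha>0*(x-a)^2" if "x \<ge> a" for x
    proof -
      have "(\<lambda>x. \<alpha>2 + \<alpha>3*(x-a) - 2*\<alpha>0*(x-a)^2 - w2 x) a \<le> (\<lambda>x. \<alpha>2 + \<alpha>3*(x-a) - 2*\<alpha>0*(x-a)^2 - w2 x) x"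
      proof (rule mono_all[OF that, where f' = "\<lambda>y. \<alpha>3 - 4*\<alpha>0*(y-a) - w3 y"])
        fix y show "((\<lambda>x. \<alpha>2 + \<alpha>3*(x-a) - 2*\<alpha>0*(x-a)^2 - w2 x) has_real_derivative \<alpha>3 - 4*\<alpha>0*(y-a) - w3 y) (at y)"
          by (rule derivative_eq_intros dw refl)+ (simp add: algebra_simps)
        assume "a \<le> y" then show "0 \<le> \<alpha>3 - 4*\<alpha>0*(y-a) - w3 y" using h3 by force
      qed
      then show ?thesis using wa by simp
    qed
    have h1: "w1 x \<le> \<alpha>1 + \<alpha>2*(x-a) + \<alpha>3/2*(x-a)^2 - 2/3*\<alpha>0*(x-a)^3" if "x \<ge> a" for x
    proof -
      have "(\<lambda>x. \<alpha>1 + \<alpha>2*(x-a) + \<alpha>3/2*(x-a)^2 - 2/3*\<alpha>0*(x-a)^3 - w1 x) a \<le> (\<lambda>x. \<alpha>1 + \<alpha>2*(x-a) + \<alpha>3/2*(x-a)^2 - 2/3*\<alpha>0*(x-a)^3 - w1 x) x"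
      proof (rule mono_all[OF that, where f' = "\<lambda>y. \<alpha>2 + \<alpha>3*(y-a) - 2*\<alpha>0*(y-a)^2 - w2 y"])
        fix y show "((\<lambda>x. \<alpha>1 + \<alpha>2*(x-a) + \<alpha>3/2*(x-a)^2 - 2/3*\<alpha>0*(x-a)^3 - w1 x) has_real_derivative \<alpha>2 + \<alpha>3*(y-a) - 2*\<alpha>0*(y-a)^2 - w2 y) (at y)"
          by (rule derivative_eq_intros dw refl)+ (simp add: algebra_simps power2_eq_square)
        assume "a \<le> y" then show "0 \<le> \<alpha>2 + \<alpha>3*(y-a) - 2*\<alpha>0*(y-a)^2 - w2 y" using h2 by force
      qed
      then show ?thesis using wa by simp
    qed
    define t where "t = 1 + 3 * (\<alpha>1 + \<alpha>2 + \<alpha>3) / (2 * \<alpha>0)"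
    have t1: "t \<ge> 1" unfolding t_def using pos by simp
    have t2: "2/3 * \<alpha>0 * t \<ge> \<alpha>1 + \<alpha>2 + \<alpha>3" unfolding t_def using pos by (simp add: field_simps)
    have "\<alpha>1 + \<alpha>2*t + \<alpha>3/2*t^2 \<le> (\<alpha>1 + \<alpha>2 + \<alpha>3) * t^2"
    proof -
      have "\<alpha>1 \<le> \<alpha>1 * t^2" using t1 pos by (simp add: one_le_power)
      moreover have "\<alpha>2 * t \<le> \<alpha>2 * t^2" using t1 pos by (simp add: power2_eq_square)
      moreover have "\<alpha>3/2*t^2 \<le> \<alpha>3 * t^2" using pos by simp
      ultimately show ?thesis by (simp add: algebra_simps)
    qed
    also have "\<dots> \<le> 2/3 * \<alpha>0 * t * t^2" using mult_right_mono[OF t2, of "t^2"] by simp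
    finally have "\<alpha>1 + \<alpha>2*t + \<alpha>3/2*t^2 - 2/3*\<alpha>0*t^3 \<le> 0" by (simp add: power_def algebra_simps)
    then have "w1 (a + t) \<le> 0" using h1[of "a+t"] t1 by simp
    moreover have "w1 (a + t) > 0" using pos1 t1 by simp
    ultimately show False by simp
  qed
  then obtain x0 where x0: "x0 > a" "w1 x0 \<le> 0" by blast
  define Z where "Z = {y \<in> {a..x0}. w1 y = 0}"
  have Zne: "Z \<noteq> {}"
    using IVT2'[of w1 x0 0 a] x0 wa pos cw1 unfolding Z_def by force
  have Zc: "closed Z" unfolding Z_def by (rule continuous_closed_preimage_constant[OF cw1]) simp
  have Zb: "bdd_below Z" unfolding Z_def by (rule bdd_belowI[of _ a]) auto
  define b where "b = Inf Z"
  have bZ: "b \<in> Z" unfolding b_def using closed_contains_Inf[OF Zne Zb Zc] .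
  then have bab: "a \<le> b" "b \<le> x0" "w1 b = 0" unfolding Z_def by auto
  have ab: "a < b" using bab wa pos by (cases "a = b") auto
  have w1pos: "w1 y > 0" if ya: "a \<le> y" "y < b" for y
  proof (rule ccontr)
    assume "\<not> w1 y > 0"
    then obtain z where "a \<le> z" "z \<le> y" "w1 z = 0"
      using IVT2'[of w1 y 0 a] ya wa pos cw1 by force
    then have "z \<in> Z" using ya bab unfolding Z_def by auto
    then have "b \<le> z" unfolding b_def using Zb by (simp add: cInf_lower)
    then show False using \<open>z \<le> y\<close> ya by simp
  qed
  have w1nn: "w1 y \<ge> 0" if "a \<le> y" "y \<le> b" for y
    using w1pos[of y] that bab by (cases "y = b") auto
  have wge: "w y \<ge> \<alpha>0" if "a \<le> y" "y \<le> b" for y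
    using mono_all[of a y w w1] dw w1nn wa that by force
  have w3neg: "w3 b < 0"
  proof (rule ccontr)
    assume "\<not> w3 b < 0"
    then have "w3 b \<ge> 0" by simp
    have w3nn: "w3 y \<ge> 0" if "a \<le> y" "y \<le> b" for y
    proof -
      have "(\<lambda>x. - w3 x) y \<le> (\<lambda>x. - w3 x) b"
      proof (rule mono_all[OF that(2), where f' = "\<lambda>y. 4 * w y"])
        fix x show "((\<lambda>x. - w3 x) has_real_derivative 4 * w x) (at x)"
          by (rule derivative_eq_intros dw refl)+ simp
        assume "y \<le> x" "x \<le> b" then show "0 \<le> 4 * w x" using wge[of x] that pos by simp
      qed
      then show ?thesis using \<open>w3 b \<ge> 0\<close> by simp
    qed
    have w2ge: "w2 y \<ge> \<alpha>2" if "a \<le> y" "y \<le> b" for y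
      using mono_all[of a y w2 w3] dw w3nn wa that by force
    have "w1 b \<ge> w1 a" using mono_all[of a b w1 w2] dw w2ge pos bab by force
    then show False using bab wa pos by simp
  qed
  have "w b > 0" using wge[of b] bab pos by simp
  then show ?thesis using ab bab w3neg unfolding w_def w1_def w3_def by blast
qed
theorem proposition1:
  fixes a \<alpha>0 \<alpha>1 \<alpha>2 \<alpha>3 :: real
  assumes "\<alpha>0 > 0" "\<alpha>1 > 0" "\<alpha>2 > 0" "\<alpha>3 > 0"
  shows "\<exists>b A B. b > a \<and> A > 0 \<and> B > 0 \<and>
           (\<forall>u u1 u2 u3. ode_solution a b A B \<alpha>0 \<alpha>1 \<alpha>2 \<alpha>3 u u1 u2 u3 \<longrightarrow>
              (\<exists>\<zeta>. \<zeta> > b \<and> u1 \<zeta> = 0 \<and> u3 \<zeta> = 0))"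
proof -
  obtain b where b: "b > a" "W \<alpha>1 \<alpha>2 \<alpha>3 (-4*\<alpha>0) (b - a) = 0" "W \<alpha>0 \<alpha>1 \<alpha>2 \<alpha>3 (b - a) > 0"
    "W \<alpha>3 (-4*\<alpha>0) (-4*\<alpha>1) (-4*\<alpha>2) (b - a) < 0"
    using find_b[OF assms, of a] by blast
  obtain k x where kx: "k > 0" "x > 0"
    "W \<alpha>3 (-4*\<alpha>0) (-4*\<alpha>1) (-4*\<alpha>2) (b - a) * cosh x + (W \<alpha>0 \<alpha>1 \<alpha>2 \<alpha>3 (b - a) * k^3
       + W \<alpha>2 \<alpha>3 (-4*\<alpha>0) (-4*\<alpha>1) (b - a) * k) * sinh x = 0"
    "W \<alpha>3 (-4*\<alpha>0) (-4*\<alpha>1) (-4*\<alpha>2) (b - a) * cos x + (W \<alpha>0 \<alpha>1 \<alpha>2 \<alpha>3 (b - a) * k^3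
       - W \<alpha>2 \<alpha>3 (-4*\<alpha>0) (-4*\<alpha>1) (b - a) * k) * sin x = 0"
    using choose_params[OF b(3) b(4), of "W \<alpha>2 \<alpha>3 (-4*\<alpha>0) (-4*\<alpha>1) (b - a)"] by blast
  show ?thesis
  proof (rule exI[of _ b], rule exI[of _ 4], rule exI[of _ "k^4"], intro conjI allI impI)
    show "b > a" "(4::real) > 0" "k^4 > 0" using b kx by auto
    fix u u1 u2 u3
    assume ode: "ode_solution a b 4 (k^4) \<alpha>0 \<alpha>1 \<alpha>2 \<alpha>3 u u1 u2 u3"
    note r1 = region1[OF ode b(1)]
    have "u1 (b + x / k) = 0 \<and> u3 (b + x / k) = 0"
      by (rule region2[OF ode b(1) refl kx(1) kx(2) refl]) (use r1 b kx in auto)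
    moreover have "b + x / k > b" using kx by simp
    ultimately show "\<exists>\<zeta>>b. u1 \<zeta> = 0 \<and> u3 \<zeta> = 0" by blast
  qed
qed

end
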